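(* Let $p=[p_1,\dots,p_m]^T\in A^m$, $A=\mathbb C[t_1,\dots,t_n]$. For each $i$ let $d_{ij}$ be the degree of $p_i$ in $t_j$ and $\mathcal E_{p_i}=\{\alpha\in\mathbb N_0^n:\alpha_j\le d_{ij}+1\text{ for }1\le j\le n\}=\{\alpha_{i1},\dots,\alpha_{il_i}\}$. Let $\mathrm{Der}_p$ be the tuple $(p_1,\partial^{\alpha_{11}}\bullet p_1,\dots,\partial^{\alpha_{1l_1}}\bullet p_1,\dots,p_m,\partial^{\alpha_{m1}}\bullet p_m,\dots,\partial^{\alpha_{ml_m}}\bullet p_m)$ of length $L=\sum_i(l_i+1)$, let $\mathrm{Syz}(\mathrm{Der}_p)=\{q\in A^{1\times L}:\sum_k q_k(\mathrm{Der}_p)_k=0\}$, let $M\in\mathcal W_n^{L\times m}$ be the matrix with rows $e_1,\partial^{\alpha_{11}}e_1,\dots,\partial^{\alpha_{1l_1}}e_1,\dots,e_m,\partial^{\alpha_{m1}}e_m,\dots,\partial^{\alpha_{ml_m}}e_m$, and let $\Phi_p:\mathrm{Syz}(\mathrm{Der}_p)\to\mathcal W_n^{1\times m}$, $q\mapsto q\cdot M$. Then $\Phi_p$ takes values in $\ker(\kappa_p)$ and the left $\mathcal W_n$-submodule generated by the image of $\Phi_p$ equals $\ker(\kappa_p)$.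
   Context: $\mathcal W_n$ is the $n$-th Weyl algebra $\mathbb C[t_1,\dots,t_n]\langle\partial_1,\dots,\partial_n\rangle$ with relations $\partial_it_j=t_j\partial_i+\delta_{ij}$, $t_it_j=t_jt_i$, $\partial_i\partial_j=\partial_j\partial_i$; it acts on $A=\mathbb C[t_1,\dots,t_n]$ by $\partial_i\bullet p=\partial p/\partial t_i$ and multiplication by $t_i$. Multi-index notation $\partial^\alpha=\partial_1^{\alpha_1}\cdots\partial_n^{\alpha_n}$. $e_i$ are the canonical basis vectors of $\mathcal W_n^{1\times m}$. For $p\in A^m$, $\ker(\kappa_p)=\{a\in\mathcal W_n^{1\times m}:\sum_ia_i\bullet p_i=0\}$. *)

theory Defs
  imports Complex_Main "HOL-Library.Poly_Mapping"
begin

text \<open>Polynomials in the variables t_0, t_1, ... over the complex numbers: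
  a monomial is an exponent vector (nat \<Rightarrow>_0 nat), a polynomial maps monomials to
  coefficients.  The ring A = C[t_1..t_n] is the set of polynomials in variables with
  index < n (variable t_{j+1} of the paper is index j here).\<close>

type_synonym mpoly = "(nat \<Rightarrow>\<^sub>0 nat) \<Rightarrow>\<^sub>0 complex"

definition polyA :: "nat \<Rightarrow> mpoly set" where
  "polyA n = {p. \<forall>m \<in> Poly_Mapping.keys p. Poly_Mapping.keys m \<subseteq> {..<n}}"

definition var :: "nat \<Rightarrow> mpoly" where
  "var i = Poly_Mapping.single (Poly_Mapping.single i 1) 1"

definition cpoly :: "complex \<Rightarrow> mpoly" where
  "cpoly c = Poly_Mapping.single 0 c"

definition pderiv_var :: "nat \<Rightarrow> mpoly \<Rightarrow> mpoly" where
  "pderiv_var i p = Abs_poly_mapping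
     (\<lambda>m::nat \<Rightarrow>\<^sub>0 nat. of_nat (Poly_Mapping.lookup m i + 1) * Poly_Mapping.lookup p (m + Poly_Mapping.single i 1))"

definition pderivs :: "nat \<Rightarrow> (nat \<Rightarrow>\<^sub>0 nat) \<Rightarrow> mpoly \<Rightarrow> mpoly" where
  "pderivs n \<alpha> = foldr (\<lambda>j f. (pderiv_var j ^^ Poly_Mapping.lookup \<alpha> j) \<circ> f) [0..<n] id"

text \<open>The Weyl algebra W_n, realised as the algebra of C-linear operators on polynomials
  generated by the multiplications by constants and by t_i and the derivations \<partial>_i
  (the ring of differential operators with polynomial coefficients); multiplication in
  W_n is composition and the action \<bullet> is application.\<close>
inductive_set weyl :: "nat \<Rightarrow> (mpoly \<Rightarrow> mpoly) set" for n where
  const: "(\<lambda>p. cpoly c * p) \<in> weyl n"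
| mult_var: "i < n \<Longrightarrow> (\<lambda>p. var i * p) \<in> weyl n"
| deriv: "i < n \<Longrightarrow> pderiv_var i \<in> weyl n"
| add: "f \<in> weyl n \<Longrightarrow> g \<in> weyl n \<Longrightarrow> (\<lambda>p. f p + g p) \<in> weyl n"
| comp: "f \<in> weyl n \<Longrightarrow> g \<in> weyl n \<Longrightarrow> f \<circ> g \<in> weyl n"

text \<open>Row vectors W_n^{1\<times>m}: entries indexed by j < m, zero operator elsewhere.\<close>
definition weyl_rows :: "nat \<Rightarrow> nat \<Rightarrow> (nat \<Rightarrow> mpoly \<Rightarrow> mpoly) set" where
  "weyl_rows n m = {a. (\<forall>j<m. a j \<in> weyl n) \<and> (\<forall>j\<ge>m. a j = (\<lambda>_. 0))}"

definition ker_kappa :: "nat \<Rightarrow> nat \<Rightarrow> (nat \<Rightarrow> mpoly) \<Rightarrow> (nat \<Rightarrow> mpoly \<Rightarrow> mpoly) set" where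
  "ker_kappa n m p = {a \<in> weyl_rows n m. (\<Sum>i<m. a i (p i)) = 0}"

definition left_submod_gen :: "nat \<Rightarrow> (nat \<Rightarrow> mpoly \<Rightarrow> mpoly) set \<Rightarrow> (nat \<Rightarrow> mpoly \<Rightarrow> mpoly) set" where
  "left_submod_gen n S = {a. \<exists>F c. finite F \<and> F \<subseteq> S \<and> (\<forall>s\<in>F. c s \<in> weyl n) \<and>
       a = (\<lambda>j x. \<Sum>s\<in>F. c s (s j x))}"

text \<open>Degree of p in variable j (taken to be 0 for p = 0).\<close>
definition deg_in :: "mpoly \<Rightarrow> nat \<Rightarrow> nat" where
  "deg_in p j = Max (insert 0 ((\<lambda>m. Poly_Mapping.lookup m j) ` Poly_Mapping.keys p))"

definition Eset :: "nat \<Rightarrow> mpoly \<Rightarrow> (nat \<Rightarrow>\<^sub>0 nat) set" where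
  "Eset n q = {\<alpha>. Poly_Mapping.keys \<alpha> \<subseteq> {..<n} \<and> (\<forall>j<n. Poly_Mapping.lookup \<alpha> j \<le> deg_in q j + 1)}"

text \<open>Index set of the tuple Der_p: (i, None) stands for the entry p_i, and (i, Some \<alpha>)
  for the entry \<partial>^\<alpha> \<bullet> p_i, \<alpha> \<in> E_{p_i}.\<close>
definition Didx :: "nat \<Rightarrow> nat \<Rightarrow> (nat \<Rightarrow> mpoly) \<Rightarrow> (nat \<times> (nat \<Rightarrow>\<^sub>0 nat) option) set" where
  "Didx n m p = {(i, None) | i. i < m} \<union> {(i, Some \<alpha>) | i \<alpha>. i < m \<and> \<alpha> \<in> Eset n (p i)}"

text \<open>The operator in row k of M in column i (its only possibly nonzero column).\<close>
definition Mop :: "nat \<Rightarrow> (nat \<times> (nat \<Rightarrow>\<^sub>0 nat) option) \<Rightarrow> mpoly \<Rightarrow> mpoly" where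
  "Mop n k = (case snd k of None \<Rightarrow> id | Some \<alpha> \<Rightarrow> pderivs n \<alpha>)"

definition Mmat :: "nat \<Rightarrow> (nat \<times> (nat \<Rightarrow>\<^sub>0 nat) option) \<Rightarrow> nat \<Rightarrow> mpoly \<Rightarrow> mpoly" where
  "Mmat n k j = (if fst k = j then Mop n k else (\<lambda>_. 0))"

definition Der :: "nat \<Rightarrow> (nat \<Rightarrow> mpoly) \<Rightarrow> (nat \<times> (nat \<Rightarrow>\<^sub>0 nat) option) \<Rightarrow> mpoly" where
  "Der n p k = Mop n k (p (fst k))"

definition Syz :: "nat \<Rightarrow> nat \<Rightarrow> (nat \<Rightarrow> mpoly) \<Rightarrow> ((nat \<times> (nat \<Rightarrow>\<^sub>0 nat) option) \<Rightarrow> mpoly) set" where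
  "Syz n m p = {q. (\<forall>k \<in> Didx n m p. q k \<in> polyA n) \<and> (\<forall>k. k \<notin> Didx n m p \<longrightarrow> q k = 0) \<and>
      (\<Sum>k\<in>Didx n m p. q k * Der n p k) = 0}"

text \<open>\<Phi>_p(q) = q \<cdot> M, where q_k \<in> A is viewed in W_n as multiplication by q_k.\<close>
definition Phi :: "nat \<Rightarrow> nat \<Rightarrow> (nat \<Rightarrow> mpoly) \<Rightarrow> ((nat \<times> (nat \<Rightarrow>\<^sub>0 nat) option) \<Rightarrow> mpoly)
    \<Rightarrow> nat \<Rightarrow> mpoly \<Rightarrow> mpoly" where
  "Phi n m p q = (\<lambda>j x. \<Sum>k\<in>Didx n m p. q k * Mmat n k j x)"

end

theory Submission
  imports Defs "HOL-Library.FuncSet"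
begin



abbreviation lk where "lk \<equiv> Poly_Mapping.lookup"
abbreviation ks where "ks \<equiv> Poly_Mapping.keys"
abbreviation sg where "sg \<equiv> Poly_Mapping.single"

lemma lookup_pderiv_var:
  "lk (pderiv_var i p) m = of_nat (lk m i + 1) * lk p (m + sg i 1)"
proof -
  have "{m. (of_nat (lk m i + 1) :: complex) * lk p (m + sg i 1) \<noteq> 0} \<subseteq> (\<lambda>k. k - sg i 1) ` ks p"
  proof
    fix m assume "m \<in> {m. (of_nat (lk m i + 1) :: complex) * lk p (m + sg i 1) \<noteq> 0}"
    then have "m + sg i 1 \<in> ks p" by (simp add: in_keys_iff)
    moreover have "m = (m + sg i 1) - sg i 1" by simp
    ultimately show "m \<in> (\<lambda>k. k - sg i 1) ` ks p" by blast
  qed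
  then have fin: "finite {m. (of_nat (lk m i + 1) :: complex) * lk p (m + sg i 1) \<noteq> 0}"
    by (rule finite_subset) simp
  have "lk (Abs_poly_mapping (\<lambda>m. (of_nat (lk m i + 1) :: complex) * lk p (m + sg i 1)))
     = (\<lambda>m. (of_nat (lk m i + 1) :: complex) * lk p (m + sg i 1))"
    by (rule lookup_Abs_poly_mapping[OF fin])
  then show ?thesis unfolding pderiv_var_def by (rule fun_cong[THEN trans]) simp
qed

lemma pderiv_var_add: "pderiv_var i (p + q) = pderiv_var i p + pderiv_var i q"
  by (rule poly_mapping_eqI) (simp add: lookup_pderiv_var lookup_add algebra_simps)

lemma pderiv_var_zero[simp]: "pderiv_var i 0 = 0"
  by (rule poly_mapping_eqI) (simp add: lookup_pderiv_var)

lemma pderiv_var_sum: "finite A \<Longrightarrow> pderiv_var i (\<Sum>a\<in>A. f a) = (\<Sum>a\<in>A. pderiv_var i (f a))"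
  by (induction A rule: finite_induct) (simp_all add: pderiv_var_add)

lemma pderiv_var_comm: "pderiv_var i (pderiv_var j p) = pderiv_var j (pderiv_var i p)"
proof (rule poly_mapping_eqI)
  fix m
  show "lk (pderiv_var i (pderiv_var j p)) m = lk (pderiv_var j (pderiv_var i p)) m"
  proof (cases "i = j")
    case True then show ?thesis by simp
  next
    case False
    have "m + sg i 1 + sg j 1 = m + sg j 1 + sg i 1" by (simp add: add_ac)
    moreover have "lk (m + sg i 1) j = lk m j" "lk (m + sg j 1) i = lk m i"
      using False by (simp_all add: lookup_add lookup_single)
    ultimately show ?thesis by (simp add: lookup_pderiv_var)
  qed
qed

lemma pderiv_single:
  "pderiv_var i (sg a c) = sg (a - sg i 1) (of_nat (lk a i) * c)"
proof (rule poly_mapping_eqI)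
  fix m
  show "lk (pderiv_var i (sg a c)) m = lk (sg (a - sg i 1) (of_nat (lk a i) * c)) m"
  proof (cases "lk a i = 0")
    case True
    have "a \<noteq> m + sg i 1"
    proof
      assume "a = m + sg i 1"
      then have "lk a i = lk m i + 1" by (simp add: lookup_add)
      with True show False by simp
    qed
    then show ?thesis using True by (simp add: lookup_pderiv_var lookup_single)
  next
    case False
    have eq: "(a = m + sg i 1) \<longleftrightarrow> (a - sg i 1 = m)"
    proof
      assume "a - sg i 1 = m"
      then show "a = m + sg i 1" using False
        by (auto intro!: poly_mapping_eqI simp: lookup_add lookup_minus lookup_single when_def)
    qed auto
    show ?thesis
    proof (cases "a = m + sg i 1")
      case True
      then show ?thesis by (simp add: lookup_pderiv_var lookup_single lookup_add)
    next
      case F: False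
      then show ?thesis using eq by (simp add: lookup_pderiv_var lookup_single)
    qed
  qed
qed

lemma poly_expand: "(p::mpoly) = (\<Sum>k\<in>ks p. sg k (lk p k))"
  by (rule poly_mapping_eqI) (auto simp: lookup_sum lookup_single when_def in_keys_iff)

lemma product_rule_mono:
  "pderiv_var i (sg a c * sg b d) = pderiv_var i (sg a c) * sg b d + sg a c * pderiv_var i (sg b d)"
proof -
  have 1: "sg (a - sg i 1) (of_nat (lk a i) * c) * sg b d = sg (a + b - sg i 1) (of_nat (lk a i) * c * d)"
  proof (cases "lk a i = 0")
    case True then show ?thesis by (simp add: mult_single)
  next
    case False
    then have "a - sg i 1 + b = a + b - sg i 1"
      by (auto intro!: poly_mapping_eqI simp: lookup_add lookup_minus lookup_single when_def)
    then show ?thesis by (simp add: mult_single)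
  qed
  have 2: "sg a c * sg (b - sg i 1) (of_nat (lk b i) * d) = sg (a + b - sg i 1) (of_nat (lk b i) * c * d)"
  proof (cases "lk b i = 0")
    case True then show ?thesis by (simp add: mult_single)
  next
    case False
    then have "a + (b - sg i 1) = a + b - sg i 1"
      by (auto intro!: poly_mapping_eqI simp: lookup_add lookup_minus lookup_single when_def)
    then show ?thesis by (simp add: mult_single mult_ac)
  qed
  have "pderiv_var i (sg a c * sg b d) = sg (a + b - sg i 1) (of_nat (lk a i + lk b i) * (c * d))"
    by (simp add: mult_single pderiv_single lookup_add)
  also have "\<dots> = sg (a + b - sg i 1) (of_nat (lk a i) * c * d) + sg (a + b - sg i 1) (of_nat (lk b i) * c * d)"
    by (simp add: single_add[symmetric] algebra_simps)
  also have "\<dots> = pderiv_var i (sg a c) * sg b d + sg a c * pderiv_var i (sg b d)"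
    by (simp only: pderiv_single 1 2)
  finally show ?thesis .
qed

lemma pderiv_var_mult_sg: "pderiv_var i (p * q) = pderiv_var i p * q + p * pderiv_var i q"
proof -
  have "p * q = (\<Sum>a\<in>ks p. \<Sum>b\<in>ks q. sg a (lk p a) * sg b (lk q b))"
    by (subst poly_expand[of p], subst poly_expand[of q]) (simp add: sum_product)
  then have "pderiv_var i (p * q) = (\<Sum>a\<in>ks p. \<Sum>b\<in>ks q. pderiv_var i (sg a (lk p a)) * sg b (lk q b)
        + sg a (lk p a) * pderiv_var i (sg b (lk q b)))"
    by (simp add: pderiv_var_sum product_rule_mono)
  also have "\<dots> = (\<Sum>a\<in>ks p. pderiv_var i (sg a (lk p a))) * (\<Sum>b\<in>ks q. sg b (lk q b))
        + (\<Sum>a\<in>ks p. sg a (lk p a)) * (\<Sum>b\<in>ks q. pderiv_var i (sg b (lk q b)))"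
    by (simp add: sum.distrib sum_product)
  also have "\<dots> = pderiv_var i p * q + p * pderiv_var i q"
  proof -
    have "pderiv_var i p = (\<Sum>a\<in>ks p. pderiv_var i (sg a (lk p a)))"
      by (metis poly_expand finite_keys pderiv_var_sum)
    moreover have "pderiv_var i q = (\<Sum>a\<in>ks q. pderiv_var i (sg a (lk q a)))"
      by (metis poly_expand finite_keys pderiv_var_sum)
    ultimately show ?thesis by (metis poly_expand)
  qed
  finally show ?thesis .
qed




definition PL :: "nat list \<Rightarrow> (nat \<Rightarrow>\<^sub>0 nat) \<Rightarrow> mpoly \<Rightarrow> mpoly" where
  "PL L \<alpha> = foldr (\<lambda>j f. (pderiv_var j ^^ lk \<alpha> j) \<circ> f) L id"

lemma PL_Nil[simp]: "PL [] \<alpha> = id" by (simp add: PL_def)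
lemma PL_Cons[simp]: "PL (j # L) \<alpha> = (pderiv_var j ^^ lk \<alpha> j) \<circ> PL L \<alpha>" by (simp add: PL_def)

lemma pderivs_PL: "pderivs n \<alpha> = PL [0..<n] \<alpha>"
  by (simp add: pderivs_def PL_def)

lemma comm_funpow: "(\<And>x. f (g x) = g (f x)) \<Longrightarrow> (f ^^ k) (g x) = g ((f ^^ k) x)"
  by (induction k arbitrary: x) simp_all

lemma D_comm_PL: "pderiv_var i (PL L \<alpha> x) = PL L \<alpha> (pderiv_var i x)"
proof (induction L arbitrary: x)
  case Nil then show ?case by simp
next
  case (Cons j L)
  have "pderiv_var i ((pderiv_var j ^^ lk \<alpha> j) (PL L \<alpha> x)) = (pderiv_var j ^^ lk \<alpha> j) (pderiv_var i (PL L \<alpha> x))"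
    by (rule comm_funpow[symmetric]) (rule pderiv_var_comm)
  then show ?case by (simp add: Cons)
qed

lemma PL_add: "PL L \<alpha> (PL L \<gamma> x) = PL L (\<alpha> + \<gamma>) x"
proof (induction L arbitrary: x)
  case Nil then show ?case by simp
next
  case (Cons j L)
  have c: "PL L \<alpha> ((pderiv_var j ^^ lk \<gamma> j) y) = (pderiv_var j ^^ lk \<gamma> j) (PL L \<alpha> y)" for y
    by (rule comm_funpow[symmetric]) (rule D_comm_PL)
  show ?case by (simp add: c Cons lookup_add funpow_add)
qed

lemma PL_zero_on: "(\<forall>j\<in>set L. lk \<alpha> j = 0) \<Longrightarrow> PL L \<alpha> = id"
  by (induction L) auto

lemma PL_single: "distinct L \<Longrightarrow> i \<in> set L \<Longrightarrow> PL L (sg i k) = pderiv_var i ^^ k"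
proof (induction L)
  case Nil then show ?case by simp
next
  case (Cons j L)
  show ?case
  proof (cases "j = i")
    case True
    with Cons.prems have "\<forall>j'\<in>set L. lk (sg i k) j' = 0" by (auto simp: lookup_single when_def)
    then show ?thesis using True by (simp add: PL_zero_on)
  next
    case False
    with Cons show ?thesis by (simp add: lookup_single)
  qed
qed

lemma pderivs_add: "pderivs n \<alpha> (pderivs n \<gamma> x) = pderivs n (\<alpha> + \<gamma>) x"
  by (simp add: pderivs_PL PL_add)

lemma pderivs_single: "i < n \<Longrightarrow> pderivs n (sg i k) = pderiv_var i ^^ k"
  by (simp add: pderivs_PL PL_single)

lemma pderivs_zero: "pderivs n 0 x = x"
  by (simp add: pderivs_PL PL_zero_on)

lemma D_pderivs: "i < n \<Longrightarrow> pderiv_var i (pderivs n \<beta> x) = pderivs n (sg i 1 + \<beta>) x"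
  using pderivs_single[of i n 1] by (simp add: pderivs_add[symmetric])

lemma cpoly_1: "cpoly 1 = 1" by (simp add: cpoly_def)
lemma cpoly_0: "cpoly 0 = 0" by (simp add: cpoly_def)

lemma weyl_id: "(\<lambda>p. p) \<in> weyl n"
proof -
  have "(\<lambda>p::mpoly. cpoly 1 * p) = (\<lambda>p. p)" by (simp add: cpoly_1 fun_eq_iff)
  then show ?thesis by (metis weyl.const)
qed

lemma weyl_id': "id \<in> weyl n"
  using weyl_id by (simp add: id_def)

lemma weyl_zero: "(\<lambda>p. 0) \<in> weyl n"
proof -
  have "(\<lambda>p::mpoly. cpoly 0 * p) = (\<lambda>p. 0)" by (simp add: cpoly_0 fun_eq_iff)
  then show ?thesis by (metis weyl.const)
qed

lemma weyl_funpow: "i < n \<Longrightarrow> pderiv_var i ^^ k \<in> weyl n"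
  by (induction k) (auto intro: weyl.comp weyl.deriv weyl_id')

lemma weyl_PL: "set L \<subseteq> {..<n} \<Longrightarrow> PL L \<alpha> \<in> weyl n"
proof (induction L)
  case Nil then show ?case using weyl_id by (simp add: id_def)
next
  case (Cons j L)
  then have j: "j < n" and "PL L \<alpha> \<in> weyl n" by auto
  then have "(pderiv_var j ^^ lk \<alpha> j) \<circ> PL L \<alpha> \<in> weyl n"
    by (intro weyl.comp weyl_funpow)
  then show ?case by (simp only: PL_Cons)
qed

lemma pderivs_weyl: "pderivs n \<alpha> \<in> weyl n"
proof -
  have "set [0..<n] \<subseteq> {..<n}" by auto
  then show ?thesis by (simp add: pderivs_PL weyl_PL)
qed

lemma weyl_additive: "f \<in> weyl n \<Longrightarrow> f (x + y) = f x + f y"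
proof (induction f arbitrary: x y rule: weyl.induct)
  case (const c) then show ?case by (simp add: distrib_left)
next
  case (mult_var i) then show ?case by (simp add: distrib_left)
next
  case (deriv i) then show ?case by (simp add: pderiv_var_add)
next
  case (add f g) then show ?case by (simp add: add_ac)
next
  case (comp f g) then show ?case by simp
qed

lemma weyl_map_zero: "f \<in> weyl n \<Longrightarrow> f 0 = 0"
  using weyl_additive[of f n 0 0] by simp

lemma weyl_map_sum: assumes f: "f \<in> weyl n" and A: "finite A" shows "f (\<Sum>a\<in>A. g a) = (\<Sum>a\<in>A. f (g a))"
  using A by (induction A rule: finite_induct) (simp_all add: weyl_map_zero[OF f] weyl_additive[OF f])

lemma weyl_sum_closed: "finite A \<Longrightarrow> (\<And>a. a \<in> A \<Longrightarrow> g a \<in> weyl n) \<Longrightarrow> (\<lambda>x. \<Sum>a\<in>A. g a x) \<in> weyl n"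
proof (induction A rule: finite_induct)
  case empty then show ?case by (simp add: weyl_zero)
next
  case (insert a A)
  then have "(\<lambda>x. g a x + (\<Sum>a\<in>A. g a x)) \<in> weyl n"
    by (intro weyl.add) auto
  then show ?case using insert by simp
qed

definition MW :: "nat \<Rightarrow> mpoly set" where "MW n = {c. (\<lambda>x. c * x) \<in> weyl n}"

lemma MW_add: "a \<in> MW n \<Longrightarrow> b \<in> MW n \<Longrightarrow> a + b \<in> MW n"
proof -
  have "(\<lambda>x. (a + b) * x) = (\<lambda>x. a * x + b * x)" by (simp add: fun_eq_iff distrib_right)
  then show "a \<in> MW n \<Longrightarrow> b \<in> MW n \<Longrightarrow> a + b \<in> MW n"
    unfolding MW_def using weyl.add[of "\<lambda>x. a * x" n "\<lambda>x. b * x"] by simp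
qed

lemma MW_mult: "a \<in> MW n \<Longrightarrow> b \<in> MW n \<Longrightarrow> a * b \<in> MW n"
proof -
  have "(\<lambda>x. (a * b) * x) = (\<lambda>x. a * x) \<circ> (\<lambda>x. b * x)" by (simp add: fun_eq_iff mult.assoc)
  then show "a \<in> MW n \<Longrightarrow> b \<in> MW n \<Longrightarrow> a * b \<in> MW n"
    unfolding MW_def using weyl.comp[of "\<lambda>x. a * x" n "\<lambda>x. b * x"] by simp
qed

lemma MW_cpoly: "cpoly c \<in> MW n" unfolding MW_def by (simp add: weyl.const)
lemma MW_var: "i < n \<Longrightarrow> var i \<in> MW n" unfolding MW_def by (simp add: weyl.mult_var)
lemma MW_1: "1 \<in> MW n" using MW_cpoly[of 1 n] by (simp add: cpoly_1)
lemma MW_0: "0 \<in> MW n" using MW_cpoly[of 0 n] by (simp add: cpoly_0)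

lemma MW_pow: "a \<in> MW n \<Longrightarrow> a ^ k \<in> MW n"
  by (induction k) (simp_all add: MW_1 MW_mult)

lemma MW_prod: "finite A \<Longrightarrow> (\<And>x. x \<in> A \<Longrightarrow> f x \<in> MW n) \<Longrightarrow> (\<Prod>x\<in>A. f x) \<in> MW n"
  by (induction A rule: finite_induct) (simp_all add: MW_1 MW_mult)

lemma MW_sum: "finite A \<Longrightarrow> (\<And>x. x \<in> A \<Longrightarrow> f x \<in> MW n) \<Longrightarrow> (\<Sum>x\<in>A. f x) \<in> MW n"
  by (induction A rule: finite_induct) (simp_all add: MW_0 MW_add)

lemma var_pow: "var j ^ e = sg (sg j e) 1"
proof (induction e)
  case 0 then show ?case by simp
next
  case (Suc e)
  then show ?case by (simp add: var_def mult_single single_add[symmetric] add.commute)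
qed

lemma sg_sum_exp: "finite J \<Longrightarrow> sg (\<Sum>j\<in>J. sg j (e j)) (1::complex) = (\<Prod>j\<in>J. var j ^ e j)"
proof (induction J rule: finite_induct)
  case empty then show ?case by simp
next
  case (insert x F)
  have "(\<Prod>j\<in>insert x F. var j ^ e j) = var x ^ e x * (\<Prod>j\<in>F. var j ^ e j)"
    using insert by simp
  also have "\<dots> = sg (sg x (e x)) 1 * sg (\<Sum>j\<in>F. sg j (e j)) 1"
    by (simp only: var_pow insert.IH)
  also have "\<dots> = sg (\<Sum>j\<in>insert x F. sg j (e j)) 1"
    using insert(1,2) by (simp add: mult_single)
  finally show ?case by simp
qed

lemma nat_pm_expand: "(k::nat \<Rightarrow>\<^sub>0 nat) = (\<Sum>j\<in>ks k. sg j (lk k j))"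
  by (rule poly_mapping_eqI) (auto simp: lookup_sum lookup_single when_def in_keys_iff)

lemma MW_monom: "ks k \<subseteq> {..<n} \<Longrightarrow> sg k c \<in> MW n"
proof -
  assume a: "ks k \<subseteq> {..<n}"
  have "sg k c = cpoly c * sg k 1" by (simp add: cpoly_def mult_single)
  also have "sg k (1::complex) = (\<Prod>j\<in>ks k. var j ^ lk k j)"
    by (subst nat_pm_expand) (simp add: sg_sum_exp)
  finally have "sg k c = cpoly c * (\<Prod>j\<in>ks k. var j ^ lk k j)" .
  moreover have "(\<Prod>j\<in>ks k. var j ^ lk k j) \<in> MW n"
    using a by (intro MW_prod MW_pow MW_var) auto
  ultimately show ?thesis by (simp add: MW_mult MW_cpoly)
qed

lemma mult_weyl: "c \<in> polyA n \<Longrightarrow> (\<lambda>x. c * x) \<in> weyl n"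
proof -
  assume c: "c \<in> polyA n"
  have "(\<Sum>k\<in>ks c. sg k (lk c k)) \<in> MW n"
    using c unfolding polyA_def by (intro MW_sum MW_monom) auto
  then show ?thesis using poly_expand[of c] by (simp add: MW_def)
qed




lemma keys_nat_add: "ks ((x::nat \<Rightarrow>\<^sub>0 nat) + y) = ks x \<union> ks y"
  by (auto simp: in_keys_iff lookup_add)

lemma polyA_mult: "a \<in> polyA n \<Longrightarrow> b \<in> polyA n \<Longrightarrow> a * b \<in> polyA n"
  unfolding polyA_def
proof (intro CollectI ballI)
  fix k assume a: "a \<in> {p. \<forall>m\<in>ks p. ks m \<subseteq> {..<n}}" and b: "b \<in> {p. \<forall>m\<in>ks p. ks m \<subseteq> {..<n}}"
    and k: "k \<in> ks (a * b)"
  then obtain x y where "k = x + y" "x \<in> ks a" "y \<in> ks b" using keys_mult by blast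
  then show "ks k \<subseteq> {..<n}" using a b by (auto simp: keys_nat_add)
qed

lemma polyA_add: "a \<in> polyA n \<Longrightarrow> b \<in> polyA n \<Longrightarrow> a + b \<in> polyA n"
  unfolding polyA_def
proof (intro CollectI ballI)
  fix k assume a: "a \<in> {p. \<forall>m\<in>ks p. ks m \<subseteq> {..<n}}" and b: "b \<in> {p. \<forall>m\<in>ks p. ks m \<subseteq> {..<n}}"
    and k: "k \<in> ks (a + b)"
  then have "k \<in> ks a \<union> ks b" using keys_add[of a b] by blast
  then show "ks k \<subseteq> {..<n}" using a b by blast
qed

lemma polyA_0: "0 \<in> polyA n" by (simp add: polyA_def)
lemma polyA_1: "1 \<in> polyA n" by (simp add: polyA_def)
lemma polyA_cpoly: "cpoly c \<in> polyA n" by (simp add: polyA_def cpoly_def)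
lemma polyA_var: "i < n \<Longrightarrow> var i \<in> polyA n" by (simp add: polyA_def var_def)

lemma polyA_sum: "finite A \<Longrightarrow> (\<And>x. x \<in> A \<Longrightarrow> f x \<in> polyA n) \<Longrightarrow> (\<Sum>x\<in>A. f x) \<in> polyA n"
  by (induction A rule: finite_induct) (simp_all add: polyA_0 polyA_add)

lemma keys_D: "m \<in> ks (pderiv_var i c) \<Longrightarrow> m + sg i 1 \<in> ks c"
  by (simp add: in_keys_iff lookup_pderiv_var)

lemma polyA_D: "c \<in> polyA n \<Longrightarrow> pderiv_var i c \<in> polyA n"
  unfolding polyA_def
proof (intro CollectI ballI)
  fix m assume c: "c \<in> {p. \<forall>m\<in>ks p. ks m \<subseteq> {..<n}}" and m: "m \<in> ks (pderiv_var i c)"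
  then have "ks (m + sg i 1) \<subseteq> {..<n}" using keys_D by blast
  then show "ks m \<subseteq> {..<n}" by (auto simp: keys_nat_add)
qed

lemma funpow_D_kill: "(\<forall>m\<in>ks p. lk m j < k) \<Longrightarrow> (pderiv_var j ^^ k) p = 0"
proof (induction k arbitrary: p)
  case 0 then have "ks p = {}" by auto
  then show ?case by simp
next
  case (Suc k)
  have "\<forall>m\<in>ks (pderiv_var j p). lk m j < k"
  proof
    fix m assume "m \<in> ks (pderiv_var j p)"
    then have "m + sg j 1 \<in> ks p" by (rule keys_D)
    with Suc.prems have "lk (m + sg j 1) j < Suc k" by blast
    then show "lk m j < k" by (simp add: lookup_add)
  qed
  then have "(pderiv_var j ^^ k) (pderiv_var j p) = 0" by (rule Suc.IH)
  then show ?case by (simp add: funpow_Suc_right del: funpow.simps)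
qed

lemma deg_in_ge: "m \<in> ks p \<Longrightarrow> lk m j \<le> deg_in p j"
  unfolding deg_in_def by (rule Max_ge) auto

lemma pderivs_kill:
  assumes j: "j < n" and big: "lk \<beta> j > deg_in p j"
  shows "pderivs n \<beta> p = 0"
proof -
  let ?s = "sg j (lk \<beta> j)"
  have b: "\<beta> = (\<beta> - ?s) + ?s"
    by (rule poly_mapping_eqI) (simp add: lookup_add lookup_minus lookup_single when_def)
  have "\<forall>m\<in>ks p. lk m j < lk \<beta> j" using deg_in_ge big le_less_trans by blast
  then have "pderivs n ?s p = 0" using j by (simp add: pderivs_single funpow_D_kill)
  then have "pderivs n (\<beta> - ?s) (pderivs n ?s p) = 0" by (simp add: weyl_map_zero[OF pderivs_weyl])
  then show ?thesis using b by (metis pderivs_add)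
qed

lemma nat_pm_expand_n: "ks (\<alpha>::nat \<Rightarrow>\<^sub>0 nat) \<subseteq> {..<n} \<Longrightarrow> \<alpha> = (\<Sum>j<n. sg j (lk \<alpha> j))"
  by (rule poly_mapping_eqI) (auto simp: lookup_sum lookup_single when_def in_keys_iff)

lemma fin_bounded: "finite {\<alpha>::nat \<Rightarrow>\<^sub>0 nat. ks \<alpha> \<subseteq> {..<n} \<and> (\<forall>j<n. lk \<alpha> j \<le> N)}"
proof -
  have "{\<alpha>::nat \<Rightarrow>\<^sub>0 nat. ks \<alpha> \<subseteq> {..<n} \<and> (\<forall>j<n. lk \<alpha> j \<le> N)}
     \<subseteq> (\<lambda>f. \<Sum>j<n. sg j (f j)) ` (PiE {..<n} (\<lambda>_. {..N}))"
  proof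
    fix \<alpha> :: "nat \<Rightarrow>\<^sub>0 nat" assume a: "\<alpha> \<in> {\<alpha>. ks \<alpha> \<subseteq> {..<n} \<and> (\<forall>j<n. lk \<alpha> j \<le> N)}"
    have "restrict (lk \<alpha>) {..<n} \<in> PiE {..<n} (\<lambda>_. {..N})" using a by auto
    moreover have "\<alpha> = (\<Sum>j<n. sg j (restrict (lk \<alpha>) {..<n} j))"
      using a nat_pm_expand_n[of \<alpha> n] by simp
    ultimately show "\<alpha> \<in> (\<lambda>f. \<Sum>j<n. sg j (f j)) ` (PiE {..<n} (\<lambda>_. {..N}))" by blast
  qed
  moreover have "finite (PiE {..<n} (\<lambda>_. {..N::nat}))" by (rule finite_PiE) auto
  ultimately show ?thesis using finite_subset by blast
qed

lemma Eset_finite: "finite (Eset n q)"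
proof -
  let ?N = "\<Sum>j<n. deg_in q j + 1"
  have "Eset n q \<subseteq> {\<alpha>. ks \<alpha> \<subseteq> {..<n} \<and> (\<forall>j<n. lk \<alpha> j \<le> ?N)}"
  proof
    fix \<alpha> assume a: "\<alpha> \<in> Eset n q"
    have "\<forall>j<n. lk \<alpha> j \<le> ?N"
    proof (intro allI impI)
      fix j assume "j < n"
      then have "deg_in q j + 1 \<le> ?N" by (intro member_le_sum) auto
      then show "lk \<alpha> j \<le> ?N" using a \<open>j < n\<close> unfolding Eset_def by fastforce
    qed
    then show "\<alpha> \<in> {\<alpha>. ks \<alpha> \<subseteq> {..<n} \<and> (\<forall>j<n. lk \<alpha> j \<le> ?N)}" using a unfolding Eset_def by blast
  qed
  then show ?thesis using fin_bounded finite_subset by blast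
qed

lemma Didx_finite: "finite (Didx n m p)"
proof -
  have "Didx n m p \<subseteq> {..<m} \<times> (insert None (Some ` (\<Union>i<m. Eset n (p i))))"
    unfolding Didx_def by auto
  moreover have "finite ({..<m} \<times> (insert None (Some ` (\<Union>i<m. Eset n (p i)))))"
    by (simp add: Eset_finite)
  ultimately show ?thesis using finite_subset by blast
qed

lemma Didx_fst: "k \<in> Didx n m p \<Longrightarrow> fst k < m"
  unfolding Didx_def by auto




inductive_set NF :: "nat \<Rightarrow> (mpoly \<Rightarrow> mpoly) set" for n where
  NF_zero: "(\<lambda>x. 0) \<in> NF n"
| NF_gen: "c \<in> polyA n \<Longrightarrow> ks \<beta> \<subseteq> {..<n} \<Longrightarrow> (\<lambda>x. c * pderivs n \<beta> x) \<in> NF n"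
| NF_add: "f \<in> NF n \<Longrightarrow> g \<in> NF n \<Longrightarrow> (\<lambda>x. f x + g x) \<in> NF n"

lemma NF_left_mult: assumes c0: "c0 \<in> polyA n" shows "g \<in> NF n \<Longrightarrow> (\<lambda>x. c0 * g x) \<in> NF n"
proof (induction g rule: NF.induct)
  case NF_zero
  have "(\<lambda>x::mpoly. 0::mpoly) \<in> NF n" by (rule NF.NF_zero)
  then show ?case by simp
next
  case (NF_gen c \<beta>)
  have "(\<lambda>x. (c0 * c) * pderivs n \<beta> x) \<in> NF n"
    using NF_gen c0 by (intro NF.NF_gen polyA_mult) auto
  then show ?case by (simp add: mult.assoc)
next
  case (NF_add f g)
  have "(\<lambda>x. (\<lambda>x. c0 * f x) x + (\<lambda>x. c0 * g x) x) \<in> NF n"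
    using NF_add by (intro NF.NF_add) auto
  then show ?case by (simp add: distrib_left)
qed

lemma NF_D: assumes i: "i < n" shows "g \<in> NF n \<Longrightarrow> (\<lambda>x. pderiv_var i (g x)) \<in> NF n"
proof (induction g rule: NF.induct)
  case NF_zero
  have "(\<lambda>x::mpoly. 0::mpoly) \<in> NF n" by (rule NF.NF_zero)
  then show ?case by simp
next
  case (NF_gen c \<beta>)
  have "(\<lambda>x. (\<lambda>x. pderiv_var i c * pderivs n \<beta> x) x + (\<lambda>x. c * pderivs n (sg i 1 + \<beta>) x) x) \<in> NF n"
    using NF_gen i by (intro NF.NF_add NF.NF_gen polyA_D) (auto simp: keys_nat_add)
  then show ?case using NF_gen i by (simp add: pderiv_var_mult_sg D_pderivs)
next
  case (NF_add f g)
  have "(\<lambda>x. (\<lambda>x. pderiv_var i (f x)) x + (\<lambda>x. pderiv_var i (g x)) x) \<in> NF n"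
    using NF_add by (intro NF.NF_add) auto
  then show ?case by (simp add: pderiv_var_add)
qed

lemma weyl_comp_NF: "f \<in> weyl n \<Longrightarrow> g \<in> NF n \<Longrightarrow> f \<circ> g \<in> NF n"
proof (induction f arbitrary: g rule: weyl.induct)
  case (const c)
  have "(\<lambda>x. cpoly c * g x) \<in> NF n" by (rule NF_left_mult[OF polyA_cpoly const])
  then show ?case by (simp add: o_def)
next
  case (mult_var i)
  have "(\<lambda>x. var i * g x) \<in> NF n" by (rule NF_left_mult[OF polyA_var[OF mult_var(1)] mult_var(2)])
  then show ?case by (simp add: o_def)
next
  case (deriv i)
  have "(\<lambda>x. pderiv_var i (g x)) \<in> NF n" by (rule NF_D[OF deriv(1) deriv(2)])
  then show ?case by (simp add: o_def)
next
  case (add f f')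
  have "(\<lambda>x. (f \<circ> g) x + (f' \<circ> g) x) \<in> NF n" using add by (intro NF.NF_add) auto
  then show ?case by (simp add: o_def)
next
  case (comp f f')
  then show ?case by (simp add: comp_assoc)
qed

lemma weyl_NF: "f \<in> weyl n \<Longrightarrow> f \<in> NF n"
proof -
  assume f: "f \<in> weyl n"
  have "(\<lambda>x. 1 * pderivs n 0 x) \<in> NF n" by (rule NF.NF_gen) (auto simp: polyA_1)
  from weyl_comp_NF[OF f this] show ?thesis by (simp add: pderivs_zero o_def)
qed

lemma LS_zero: "(\<lambda>j x. 0) \<in> left_submod_gen n S"
  unfolding left_submod_gen_def by (rule CollectI, rule exI[of _ "{}"]) auto

lemma LS_gen: "s \<in> S \<Longrightarrow> w \<in> weyl n \<Longrightarrow> (\<lambda>j x. w (s j x)) \<in> left_submod_gen n S"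
  unfolding left_submod_gen_def
  by (rule CollectI, rule exI[of _ "{s}"], rule exI[of _ "\<lambda>_. w"]) auto

lemma if_fun_app: "(if P then f else (\<lambda>_. 0)) x = (if P then f x else 0)"
  by simp

lemma sum_if_restrict:
  assumes "finite T" "S \<subseteq> T"
  shows "(\<Sum>s\<in>T. (if s \<in> S then f s else (\<lambda>_. 0)) (y s)) = (\<Sum>s\<in>S. f s (y s))"
proof -
  have "(\<Sum>s\<in>T. (if s \<in> S then f s else (\<lambda>_. 0)) (y s)) = (\<Sum>s\<in>T. if s \<in> S then f s (y s) else 0)"
    by (simp add: if_fun_app)
  also have "\<dots> = (\<Sum>s\<in>T \<inter> S. f s (y s))" using assms(1) by (simp add: sum.inter_restrict)
  also have "T \<inter> S = S" using assms(2) by blast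
  finally show ?thesis .
qed

lemma LS_add:
  assumes a: "a \<in> left_submod_gen n S" and b: "b \<in> left_submod_gen n S"
  shows "(\<lambda>j x. a j x + b j x) \<in> left_submod_gen n S"
proof -
  obtain F1 c1 where F1: "finite F1" "F1 \<subseteq> S" "\<forall>s\<in>F1. c1 s \<in> weyl n"
    and a_eq: "a = (\<lambda>j x. \<Sum>s\<in>F1. c1 s (s j x))"
    using a unfolding left_submod_gen_def by blast
  obtain F2 c2 where F2: "finite F2" "F2 \<subseteq> S" "\<forall>s\<in>F2. c2 s \<in> weyl n"
    and b_eq: "b = (\<lambda>j x. \<Sum>s\<in>F2. c2 s (s j x))"
    using b unfolding left_submod_gen_def by blast
  define c where "c s = (\<lambda>x. (if s \<in> F1 then c1 s else (\<lambda>_. 0)) x + (if s \<in> F2 then c2 s else (\<lambda>_. 0)) x)" for s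
  have cw: "c s \<in> weyl n" for s
    unfolding c_def using F1(3) F2(3) by (intro weyl.add) (auto simp: weyl_zero)
  have fin: "finite (F1 \<union> F2)" using F1 F2 by simp
  have eq: "(\<lambda>j x. a j x + b j x) = (\<lambda>j x. \<Sum>s\<in>F1 \<union> F2. c s (s j x))"
  proof (intro ext)
    fix j x
    have "(\<Sum>s\<in>F1 \<union> F2. c s (s j x)) =
        (\<Sum>s\<in>F1 \<union> F2. (if s \<in> F1 then c1 s else (\<lambda>_. 0)) (s j x)) +
        (\<Sum>s\<in>F1 \<union> F2. (if s \<in> F2 then c2 s else (\<lambda>_. 0)) (s j x))"
      unfolding c_def by (rule sum.distrib)
    also have "\<dots> = (\<Sum>s\<in>F1. c1 s (s j x)) + (\<Sum>s\<in>F2. c2 s (s j x))"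
      using fin by (simp only: sum_if_restrict[OF fin] Un_upper1 Un_upper2)
    finally show "a j x + b j x = (\<Sum>s\<in>F1 \<union> F2. c s (s j x))" using a_eq b_eq by simp
  qed
  show ?thesis unfolding eq left_submod_gen_def
    by (rule CollectI, rule exI[of _ "F1 \<union> F2"], rule exI[of _ c]) (use fin F1(2) F2(2) cw in auto)
qed

lemma LS_sum:
  assumes "finite I" "\<And>i. i \<in> I \<Longrightarrow> r i \<in> left_submod_gen n S"
  shows "(\<lambda>j x. \<Sum>i\<in>I. r i j x) \<in> left_submod_gen n S"
  using assms
proof (induction I rule: finite_induct)
  case empty then show ?case using LS_zero by simp
next
  case (insert i I)
  have "(\<lambda>j x. r i j x + (\<lambda>j x. \<Sum>i\<in>I. r i j x) j x) \<in> left_submod_gen n S"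
    using insert by (intro LS_add) auto
  then show ?case using insert by simp
qed




lemma Mmat_apply: "Mmat n k j x = (if fst k = j then Mop n k x else 0)"
  by (simp add: Mmat_def)

lemma Mop_weyl: "Mop n k \<in> weyl n"
  by (cases "snd k") (simp_all add: Mop_def weyl_id' pderivs_weyl)

lemma Mmat_weyl: "Mmat n k j \<in> weyl n"
  by (simp add: Mmat_def Mop_weyl weyl_zero)

lemma Phi_apply: "Phi n m p q j x = (\<Sum>k\<in>Didx n m p. q k * Mmat n k j x)"
  by (simp add: Phi_def)

lemma Phi_weyl: "(\<forall>k\<in>Didx n m p. q k \<in> polyA n) \<Longrightarrow> Phi n m p q j \<in> weyl n"
proof -
  assume q: "\<forall>k\<in>Didx n m p. q k \<in> polyA n"
  have "(\<lambda>x. \<Sum>k\<in>Didx n m p. ((\<lambda>y. q k * y) \<circ> Mmat n k j) x) \<in> weyl n"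
    using q by (intro weyl_sum_closed Didx_finite weyl.comp mult_weyl Mmat_weyl) auto
  then show ?thesis by (simp add: Phi_def o_def)
qed

lemma Phi_high: "j \<ge> m \<Longrightarrow> Phi n m p q j = (\<lambda>_. 0)"
proof (rule ext)
  fix x assume j: "j \<ge> m"
  have "\<forall>k\<in>Didx n m p. Mmat n k j x = 0" using j Didx_fst by (fastforce simp: Mmat_apply)
  then show "Phi n m p q j x = 0" by (simp add: Phi_apply)
qed

lemma Phi_kappa: "(\<Sum>i<m. Phi n m p q i (p i)) = (\<Sum>k\<in>Didx n m p. q k * Der n p k)"
proof -
  have "(\<Sum>i<m. Phi n m p q i (p i)) = (\<Sum>k\<in>Didx n m p. \<Sum>i<m. q k * (if fst k = i then Mop n k (p i) else 0))"
    by (simp add: Phi_apply Mmat_apply sum.swap[of _ "{..<m}"])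
  also have "\<dots> = (\<Sum>k\<in>Didx n m p. q k * Der n p k)"
  proof (rule sum.cong[OF refl])
    fix k assume "k \<in> Didx n m p"
    then have "fst k < m" by (rule Didx_fst)
    then show "(\<Sum>i<m. q k * (if fst k = i then Mop n k (p i) else 0)) = q k * Der n p k"
      by (simp add: Der_def if_distrib[of "(*) (q k)"] cong: if_cong)
  qed
  finally show ?thesis .
qed

lemma Phi_in_ker: "q \<in> Syz n m p \<Longrightarrow> Phi n m p q \<in> ker_kappa n m p"
proof -
  assume q: "q \<in> Syz n m p"
  have "Phi n m p q \<in> weyl_rows n m"
    unfolding weyl_rows_def using q Phi_weyl Phi_high unfolding Syz_def by auto
  moreover have "(\<Sum>i<m. Phi n m p q i (p i)) = 0"
    using q unfolding Phi_kappa Syz_def by simp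
  ultimately show ?thesis unfolding ker_kappa_def by simp
qed

lemma LS_in_ker:
  assumes S: "S \<subseteq> ker_kappa n m p"
  shows "left_submod_gen n S \<subseteq> ker_kappa n m p"
proof
  fix a assume "a \<in> left_submod_gen n S"
  then obtain F c where F: "finite F" "F \<subseteq> S" "\<forall>s\<in>F. c s \<in> weyl n"
    and a_eq: "a = (\<lambda>j x. \<Sum>s\<in>F. c s (s j x))"
    unfolding left_submod_gen_def by blast
  have rows: "s \<in> weyl_rows n m" and kap: "(\<Sum>i<m. s i (p i)) = 0" if "s \<in> F" for s
    using that F(2) S unfolding ker_kappa_def by auto
  have "a j \<in> weyl n" if "j < m" for j
  proof -
    have "(\<lambda>x. \<Sum>s\<in>F. (c s \<circ> s j) x) \<in> weyl n"
      using F rows that unfolding weyl_rows_def by (intro weyl_sum_closed weyl.comp) auto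
    then show ?thesis using a_eq by (simp add: o_def)
  qed
  moreover have "a j = (\<lambda>_. 0)" if "j \<ge> m" for j
  proof (rule ext)
    fix x
    have "\<forall>s\<in>F. c s (s j x) = 0"
      using rows that F(3) unfolding weyl_rows_def by (auto simp: weyl_map_zero)
    then show "a j x = 0" using a_eq by simp
  qed
  moreover have "(\<Sum>i<m. a i (p i)) = 0"
  proof -
    have "(\<Sum>i<m. a i (p i)) = (\<Sum>s\<in>F. \<Sum>i<m. c s (s i (p i)))"
      using a_eq by (simp add: sum.swap[of _ "{..<m}"])
    also have "\<dots> = (\<Sum>s\<in>F. c s (\<Sum>i<m. s i (p i)))"
    proof (rule sum.cong[OF refl])
      fix s assume "s \<in> F"
      then have "c s \<in> weyl n" using F(3) by blast
      then show "(\<Sum>i<m. c s (s i (p i))) = c s (\<Sum>i<m. s i (p i))"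
        by (simp add: weyl_map_sum)
    qed
    also have "\<dots> = 0" using kap F(3) by (intro sum.neutral) (auto simp: weyl_map_zero)
    finally show ?thesis .
  qed
  ultimately show "a \<in> ker_kappa n m p" unfolding ker_kappa_def weyl_rows_def by simp
qed




lemma Phi_delta:
  assumes "k0 \<in> Didx n m p"
  shows "Phi n m p (\<lambda>k. if k = k0 then c else 0) j x = c * Mmat n k0 j x"
proof -
  have "Phi n m p (\<lambda>k. if k = k0 then c else 0) j x = (\<Sum>k\<in>Didx n m p. if k = k0 then c * Mmat n k j x else 0)"
    unfolding Phi_apply by (intro sum.cong refl) simp
  also have "\<dots> = c * Mmat n k0 j x" using assms Didx_finite by simp
  finally show ?thesis .
qed

lemma Der_delta:
  assumes "k0 \<in> Didx n m p"
  shows "(\<Sum>k\<in>Didx n m p. (if k = k0 then c else 0) * Der n p k) = c * Der n p k0"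
proof -
  have "(\<Sum>k\<in>Didx n m p. (if k = k0 then c else 0) * Der n p k) = (\<Sum>k\<in>Didx n m p. if k = k0 then c * Der n p k else 0)"
    by (intro sum.cong refl) simp
  also have "\<dots> = c * Der n p k0" using assms Didx_finite by simp
  finally show ?thesis .
qed

lemma Phi_zero: "Phi n m p (\<lambda>k. 0) j x = 0"
  by (simp add: Phi_apply)

lemma Phi_add: "Phi n m p (\<lambda>k. q1 k + q2 k) j x = Phi n m p q1 j x + Phi n m p q2 j x"
  by (simp add: Phi_apply distrib_right sum.distrib)

lemma Phi_sum: "Phi n m p (\<lambda>k. \<Sum>i\<in>I. Q i k) j x = (\<Sum>i\<in>I. Phi n m p (Q i) j x)"
  by (simp add: Phi_apply sum_distrib_right sum.swap[of _ I])

definition QS :: "nat \<Rightarrow> nat \<Rightarrow> (nat \<Rightarrow> mpoly) \<Rightarrow> ((nat \<times> (nat \<Rightarrow>\<^sub>0 nat) option) \<Rightarrow> mpoly) set" where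
  "QS n m p = {q. (\<forall>k \<in> Didx n m p. q k \<in> polyA n) \<and> (\<forall>k. k \<notin> Didx n m p \<longrightarrow> q k = 0)}"

lemma row_decomp:
  assumes i: "i < m"
  shows "f \<in> NF n \<Longrightarrow> \<exists>q r. q \<in> QS n m p \<and> r \<in> left_submod_gen n (Phi n m p ` Syz n m p) \<and>
     (\<forall>j x. (if j = i then f x else 0) = Phi n m p q j x + r j x) \<and>
     (\<Sum>k\<in>Didx n m p. q k * Der n p k) = f (p i)"
proof (induction f rule: NF.induct)
  case NF_zero
  show ?case
    by (rule exI[of _ "\<lambda>k. 0"], rule exI[of _ "\<lambda>j x. 0"]) (simp add: QS_def LS_zero Phi_zero polyA_0)
next
  case (NF_add f g)
  from NF_add.IH(1) obtain q1 r1 where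
    h1: "q1 \<in> QS n m p" "r1 \<in> left_submod_gen n (Phi n m p ` Syz n m p)"
        "\<forall>j x. (if j = i then f x else 0) = Phi n m p q1 j x + r1 j x"
        "(\<Sum>k\<in>Didx n m p. q1 k * Der n p k) = f (p i)" by blast
  from NF_add.IH(2) obtain q2 r2 where
    h2: "q2 \<in> QS n m p" "r2 \<in> left_submod_gen n (Phi n m p ` Syz n m p)"
        "\<forall>j x. (if j = i then g x else 0) = Phi n m p q2 j x + r2 j x"
        "(\<Sum>k\<in>Didx n m p. q2 k * Der n p k) = g (p i)" by blast
  show ?case
  proof (rule exI[of _ "\<lambda>k. q1 k + q2 k"], rule exI[of _ "\<lambda>j x. r1 j x + r2 j x"], intro conjI allI)
    show "(\<lambda>k. q1 k + q2 k) \<in> QS n m p" using h1(1) h2(1) by (simp add: QS_def polyA_add)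
    show "(\<lambda>j x. r1 j x + r2 j x) \<in> left_submod_gen n (Phi n m p ` Syz n m p)"
      using h1(2) h2(2) by (rule LS_add)
    fix j x
    have e1: "(if j = i then f x else 0) = Phi n m p q1 j x + r1 j x" using h1(3) by blast
    have e2: "(if j = i then g x else 0) = Phi n m p q2 j x + r2 j x" using h2(3) by blast
    have "(if j = i then f x + g x else 0) = (if j = i then f x else 0) + (if j = i then g x else 0)"
      by simp
    also have "\<dots> = (Phi n m p q1 j x + r1 j x) + (Phi n m p q2 j x + r2 j x)"
      by (simp only: e1 e2)
    also have "\<dots> = Phi n m p (\<lambda>k. q1 k + q2 k) j x + (r1 j x + r2 j x)"
      by (simp only: Phi_add add_ac)
    finally show "(if j = i then f x + g x else 0) = Phi n m p (\<lambda>k. q1 k + q2 k) j x + (r1 j x + r2 j x)" .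
  next
    show "(\<Sum>k\<in>Didx n m p. (q1 k + q2 k) * Der n p k) = f (p i) + g (p i)"
      using h1(4) h2(4) by (simp add: distrib_right sum.distrib)
  qed
next
  case (NF_gen c \<beta>)
  let ?S = "Phi n m p ` Syz n m p"
  show ?case
  proof (cases "\<forall>j<n. lk \<beta> j \<le> deg_in (p i) j")
    case True
    let ?k0 = "(i, Some \<beta>)"
    have k0: "?k0 \<in> Didx n m p"
      using True NF_gen i unfolding Didx_def Eset_def by fastforce
    show ?thesis
    proof (rule exI[of _ "\<lambda>k. if k = ?k0 then c else 0"], rule exI[of _ "\<lambda>j x. 0"], intro conjI allI)
      show "(\<lambda>k. if k = ?k0 then c else 0) \<in> QS n m p"
        using k0 NF_gen by (auto simp: QS_def polyA_0)
      show "(\<lambda>j x. 0) \<in> left_submod_gen n ?S" by (rule LS_zero)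
      fix j x
      show "(if j = i then c * pderivs n \<beta> x else 0) = Phi n m p (\<lambda>k. if k = ?k0 then c else 0) j x + 0"
        by (simp add: Phi_delta[OF k0] Mmat_apply Mop_def)
    next
      show "(\<Sum>k\<in>Didx n m p. (if k = ?k0 then c else 0) * Der n p k) = c * pderivs n \<beta> (p i)"
        by (simp only: Der_delta[OF k0]) (simp add: Der_def Mop_def)
    qed
  next
    case False
    then obtain j0 where j0: "j0 < n" "lk \<beta> j0 > deg_in (p i) j0" by (auto simp: not_le)
    define d where "d = deg_in (p i) j0"
    define \<gamma> where "\<gamma> = sg j0 (d + 1)"
    let ?k0 = "(i, Some \<gamma>)"
    have gE: "\<gamma> \<in> Eset n (p i)"
      unfolding Eset_def \<gamma>_def d_def using j0 by (auto simp: lookup_single when_def)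
    have k0: "?k0 \<in> Didx n m p" using gE i unfolding Didx_def by blast
    define q0 where "q0 = (\<lambda>k. if k = ?k0 then (1::mpoly) else 0)"
    have kill\<gamma>: "pderivs n \<gamma> (p i) = 0"
      using j0(1) by (rule pderivs_kill) (simp add: \<gamma>_def d_def)
    have dsum: "(\<Sum>k\<in>Didx n m p. q0 k * Der n p k) = 0"
      unfolding q0_def by (simp only: Der_delta[OF k0]) (simp add: Der_def Mop_def kill\<gamma>)
    have q0S: "q0 \<in> Syz n m p"
      unfolding Syz_def using k0 dsum by (auto simp: q0_def polyA_1 polyA_0)
    define s where "s = Phi n m p q0"
    have sS: "s \<in> ?S" using q0S s_def by blast
    define w where "w = (\<lambda>x. c * pderivs n (\<beta> - \<gamma>) x)"
    have ww: "w \<in> weyl n"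
    proof -
      have "(\<lambda>x. c * x) \<circ> pderivs n (\<beta> - \<gamma>) \<in> weyl n"
        using NF_gen by (intro weyl.comp mult_weyl pderivs_weyl) auto
      then show ?thesis by (simp add: w_def o_def)
    qed
    have bg: "\<beta> - \<gamma> + \<gamma> = \<beta>"
      using j0 by (intro poly_mapping_eqI) (auto simp: lookup_add lookup_minus \<gamma>_def d_def lookup_single when_def)
    have s_app: "s j x = (if i = j then pderivs n \<gamma> x else 0)" for j x
      unfolding s_def q0_def by (simp add: Phi_delta[OF k0] Mmat_apply Mop_def)
    have killb: "pderivs n \<beta> (p i) = 0" using j0 by (rule pderivs_kill)
    show ?thesis
    proof (rule exI[of _ "\<lambda>k. 0"], rule exI[of _ "\<lambda>j x. w (s j x)"], intro conjI allI)
      show "(\<lambda>k. 0) \<in> QS n m p" by (simp add: QS_def polyA_0)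
      show "(\<lambda>j x. w (s j x)) \<in> left_submod_gen n ?S" using sS ww by (rule LS_gen)
      fix j x
      show "(if j = i then c * pderivs n \<beta> x else 0) = Phi n m p (\<lambda>k. 0) j x + w (s j x)"
        using bg by (auto simp: Phi_zero s_app w_def pderivs_add weyl_map_zero[OF pderivs_weyl])
    next
      show "(\<Sum>k\<in>Didx n m p. 0 * Der n p k) = c * pderivs n \<beta> (p i)"
        by (simp add: killb)
    qed
  qed
qed




theorem lemma5p1:
  fixes n m :: nat and p :: "nat \<Rightarrow> mpoly"
  assumes "\<forall>i<m. p i \<in> polyA n"
  shows "Phi n m p ` Syz n m p \<subseteq> ker_kappa n m p
    \<and> left_submod_gen n (Phi n m p ` Syz n m p) = ker_kappa n m p"
proof -
  let ?S = "Phi n m p ` Syz n m p"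
  let ?L = "left_submod_gen n ?S"
  let ?D = "Didx n m p"
  have sub: "?S \<subseteq> ker_kappa n m p" using Phi_in_ker by blast
  have le: "?L \<subseteq> ker_kappa n m p" by (rule LS_in_ker[OF sub])
  have ge: "ker_kappa n m p \<subseteq> ?L"
  proof
    fix a assume a: "a \<in> ker_kappa n m p"
    then have rows: "\<And>j. j < m \<Longrightarrow> a j \<in> weyl n" "\<And>j. j \<ge> m \<Longrightarrow> a j = (\<lambda>_. 0)"
      and kap: "(\<Sum>i<m. a i (p i)) = 0"
      unfolding ker_kappa_def weyl_rows_def by auto
    have "\<forall>i\<in>{..<m}. \<exists>qr. fst qr \<in> QS n m p \<and> snd qr \<in> ?L \<and>
        (\<forall>j x. (if j = i then a i x else 0) = Phi n m p (fst qr) j x + snd qr j x) \<and>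
        (\<Sum>k\<in>?D. fst qr k * Der n p k) = a i (p i)"
    proof
      fix i assume "i \<in> {..<m}"
      then have i: "i < m" by simp
      from row_decomp[OF i weyl_NF[OF rows(1)[OF i]]] obtain q r where
        "q \<in> QS n m p \<and> r \<in> ?L \<and> (\<forall>j x. (if j = i then a i x else 0) = Phi n m p q j x + r j x) \<and>
        (\<Sum>k\<in>?D. q k * Der n p k) = a i (p i)" by blast
      then show "\<exists>qr. fst qr \<in> QS n m p \<and> snd qr \<in> ?L \<and>
        (\<forall>j x. (if j = i then a i x else 0) = Phi n m p (fst qr) j x + snd qr j x) \<and>
        (\<Sum>k\<in>?D. fst qr k * Der n p k) = a i (p i)"
        by (intro exI[of _ "(q, r)"]) simp
    qed
    then obtain QR where QR: "\<forall>i\<in>{..<m}. fst (QR i) \<in> QS n m p \<and> snd (QR i) \<in> ?L \<and>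
        (\<forall>j x. (if j = i then a i x else 0) = Phi n m p (fst (QR i)) j x + snd (QR i) j x) \<and>
        (\<Sum>k\<in>?D. fst (QR i) k * Der n p k) = a i (p i)"
      by (rule bchoice[elim_format]) blast
    define Q where "Q i = fst (QR i)" for i
    define R where "R i = snd (QR i)" for i
    have QQS: "Q i \<in> QS n m p" and RL: "R i \<in> ?L"
      and Qrow: "\<And>j x. (if j = i then a i x else 0) = Phi n m p (Q i) j x + R i j x"
      and QDer: "(\<Sum>k\<in>?D. Q i k * Der n p k) = a i (p i)" if "i < m" for i
      using QR that unfolding Q_def R_def by auto
    define q where "q = (\<lambda>k. \<Sum>i<m. Q i k)"
    define r where "r = (\<lambda>j x. \<Sum>i<m. R i j x)"
    have qS: "q \<in> Syz n m p"
    proof -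
      have "\<forall>k\<in>?D. q k \<in> polyA n"
        using QQS unfolding q_def QS_def by (auto intro!: polyA_sum)
      moreover have "\<forall>k. k \<notin> ?D \<longrightarrow> q k = 0"
        using QQS unfolding q_def QS_def by auto
      moreover have "(\<Sum>k\<in>?D. q k * Der n p k) = 0"
      proof -
        have "(\<Sum>k\<in>?D. q k * Der n p k) = (\<Sum>i<m. \<Sum>k\<in>?D. Q i k * Der n p k)"
          unfolding q_def by (simp add: sum_distrib_right sum.swap[of _ ?D])
        also have "\<dots> = (\<Sum>i<m. a i (p i))" using QDer by simp
        finally show ?thesis using kap by simp
      qed
      ultimately show ?thesis unfolding Syz_def by blast
    qed
    have rL: "r \<in> ?L" unfolding r_def using RL by (intro LS_sum) auto
    have phiL: "(\<lambda>j x. (\<lambda>x. x) (Phi n m p q j x)) \<in> ?L"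
      using qS by (intro LS_gen weyl_id) auto
    have aeq: "a = (\<lambda>j x. Phi n m p q j x + r j x)"
    proof (intro ext)
      fix j x
      have "a j x = (\<Sum>i<m. if j = i then a i x else 0)"
      proof (cases "j < m")
        case True then show ?thesis by simp
      next
        case False then show ?thesis using rows(2)[of j] by auto
      qed
      also have "\<dots> = (\<Sum>i<m. Phi n m p (Q i) j x + R i j x)"
        using Qrow by (intro sum.cong refl) simp
      also have "\<dots> = Phi n m p q j x + r j x"
        unfolding q_def r_def by (simp add: Phi_sum sum.distrib)
      finally show "a j x = Phi n m p q j x + r j x" .
    qed
    have "(\<lambda>j x. (\<lambda>j x. (\<lambda>x. x) (Phi n m p q j x)) j x + r j x) \<in> ?L"
      using phiL rL by (rule LS_add)
    then show "a \<in> ?L" using aeq by simp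
  qed
  show ?thesis using sub le ge by blast
qed


end
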